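(* Let $(M,\pi)$ be a partial $H$-module and write $h\cdot m=\pi(h)(m)$. (a) The global core of $M$ is $$c(M)=\{m\in M : g\cdot(h\cdot m)=(gh)\cdot m \text{ for all } g,h\in H\},$$ and $c$ defines a functor ${}_H\mathcal M^{par}\to{}_H\mathcal M$ that is right adjoint to the inclusion functor $i:{}_H\mathcal M\to{}_H\mathcal M^{par}$. (b) The global shadow of $M$ is $s(M)=M/N$, where $N$ is the partial $H$-submodule of $M$ generated by all elements $h\cdot(g\cdot m)-(hg)\cdot m$ with $h,g\in H$, $m\in M$. Moreover $s$ defines a functor ${}_H\mathcal M^{par}\to{}_H\mathcal M$ that is left adjoint to $i$.
   Context: Throughout, $k$ is a field and $H$ is a Hopf algebra over $k$ with bijective antipode $S$ and Sweedler notation $\Delta(h)=h_{(1)}\otimes h_{(2)}$. A partial $H$-module is a vector space $M$ with a linear map $\pi:H\to\mathrm{End}_k(M)$ satisfying, for all $h,k\in H$: - $\pi(1_H)=\mathrm{id}$; - $\pi(h)\pi(k_{(1)})\pi(S(k_{(2)}))=\pi(hk_{(1)})\pi(S(k_{(2)}))$; - $\pi(h_{(1)})\pi(S(h_{(2)}))\pi(k)=\pi(h_{(1)})\pi(S(h_{(2)})k)$; - $\pi(h)\pi(S(k_{(1)}))\pi(k_{(2)})=\pi(hS(k_{(1)}))\pi(k_{(2)})$; - $\pi(S(h_{(1)}))\pi(h_{(2)})\pi(k)=\pi(S(h_{(1)}))\pi(h_{(2)}k)$. Morphisms of partial $H$-modules are linear maps commuting with the $\pi(h)$; they form the category ${}_H\mathcal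 M^{par}$. A partial submodule is a subspace stable under all $\pi(h)$. Every left $H$-module $M$ (action $\triangleright$) is a partial $H$-module via $\pi(h)(m)=h\triangleright m$. This gives the inclusion functor $i:{}_H\mathcal M\to{}_H\mathcal M^{par}$. A partial $H$-module is called global if $\pi$ is an algebra morphism, i.e. it lies in the image of $i$. The global core of $M$ is the largest partial submodule of $M$ that is global. The global shadow is the largest quotient of $M$ (by a partial submodule) that is global. *)

theory Defs
  imports Complex_Main
begin

text \<open>
  The base field k is a type 'k of class field; the Hopf algebra H is a type 'h of class ring_1
  (associative unital multiplication) together with a k-scalar multiplication scH making it a
  k-algebra.  Since tensor products are not available, the comultiplication is given by a
  representative: cop h is a finite list of pairs (a_i, b_i) with
  Delta(h) = sum_i a_i (x) b_i.  Equality in H (x) H (resp. H (x) H (x) H) is expressed by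
  equality under all product functionals f (x) g (resp. f (x) g (x) l), which over a field
  separates tensors.  Sweedler sums sum F(h_(1), h_(2)) for F bilinear are written swe cop F h.
\<close>

definition swe :: "('h \<Rightarrow> ('h \<times> 'h) list) \<Rightarrow> ('h \<Rightarrow> 'h \<Rightarrow> 'v::monoid_add) \<Rightarrow> 'h \<Rightarrow> 'v" where
  "swe cop F h = sum_list (map (\<lambda>(a, b). F a b) (cop h))"

definition lin_functional :: "('k::field \<Rightarrow> 'h::ab_group_add \<Rightarrow> 'h) \<Rightarrow> ('h \<Rightarrow> 'k) \<Rightarrow> bool" where
  "lin_functional scH f \<longleftrightarrow> Vector_Spaces.linear scH (*) f"

definition teq :: "('k::field \<Rightarrow> 'h::ab_group_add \<Rightarrow> 'h) \<Rightarrow> ('h \<times> 'h) list \<Rightarrow> ('h \<times> 'h) list \<Rightarrow> bool" where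
  "teq scH xs ys \<longleftrightarrow> (\<forall>f g. lin_functional scH f \<longrightarrow> lin_functional scH g \<longrightarrow>
      sum_list (map (\<lambda>(a, b). f a * g b) xs) = sum_list (map (\<lambda>(a, b). f a * g b) ys))"

definition hopf_algebra ::
  "('k::field \<Rightarrow> 'h::ring_1 \<Rightarrow> 'h) \<Rightarrow> ('h \<Rightarrow> ('h \<times> 'h) list) \<Rightarrow> ('h \<Rightarrow> 'k) \<Rightarrow> ('h \<Rightarrow> 'h) \<Rightarrow> bool" where
  "hopf_algebra scH cop eps S \<longleftrightarrow>
     \<comment> \<open>k-algebra\<close>
     vector_space scH \<and>
     (\<forall>c a b. scH c (a * b) = scH c a * b \<and> scH c (a * b) = a * scH c b) \<and>
     \<comment> \<open>comultiplication is a linear map H \<rightarrow> H (x) H\<close>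
     (\<forall>x y. teq scH (cop (x + y)) (cop x @ cop y)) \<and>
     (\<forall>c x. teq scH (cop (scH c x)) (map (\<lambda>(a, b). (scH c a, b)) (cop x))) \<and>
     \<comment> \<open>coassociativity, tested against all product functionals f (x) g (x) l\<close>
     (\<forall>f g l h. lin_functional scH f \<longrightarrow> lin_functional scH g \<longrightarrow> lin_functional scH l \<longrightarrow>
        swe cop (\<lambda>a b. swe cop (\<lambda>a1 a2. f a1 * g a2 * l b) a) h =
        swe cop (\<lambda>a b. swe cop (\<lambda>b1 b2. f a * g b1 * l b2) b) h) \<and>
     \<comment> \<open>counit: linear, and (eps (x) id) Delta = id = (id (x) eps) Delta\<close>
     lin_functional scH eps \<and>
     (\<forall>h. swe cop (\<lambda>a b. scH (eps a) b) h = h) \<and>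
     (\<forall>h. swe cop (\<lambda>a b. scH (eps b) a) h = h) \<and>
     \<comment> \<open>bialgebra: Delta and eps are algebra maps\<close>
     (\<forall>x y. teq scH (cop (x * y)) (concat (map (\<lambda>(a, b). map (\<lambda>(c, d). (a * c, b * d)) (cop y)) (cop x)))) \<and>
     teq scH (cop 1) [(1, 1)] \<and>
     (\<forall>x y. eps (x * y) = eps x * eps y) \<and> eps 1 = 1 \<and>
     \<comment> \<open>antipode: linear, convolution inverse of id, bijective\<close>
     Vector_Spaces.linear scH scH S \<and>
     (\<forall>h. swe cop (\<lambda>a b. S a * b) h = scH (eps h) 1) \<and>
     (\<forall>h. swe cop (\<lambda>a b. a * S b) h = scH (eps h) 1) \<and>
     bij S"

definition partial_module ::
  "('k::field \<Rightarrow> 'h::ring_1 \<Rightarrow> 'h) \<Rightarrow> ('h \<Rightarrow> ('h \<times> 'h) list) \<Rightarrow> ('h \<Rightarrow> 'h)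
   \<Rightarrow> ('k \<Rightarrow> 'm::ab_group_add \<Rightarrow> 'm) \<Rightarrow> ('h \<Rightarrow> 'm \<Rightarrow> 'm) \<Rightarrow> bool" where
  "partial_module scH cop S scM act \<longleftrightarrow>
     vector_space scM \<and>
     (\<forall>h. Vector_Spaces.linear scM scM (act h)) \<and>
     (\<forall>x y m. act (x + y) m = act x m + act y m) \<and>
     (\<forall>c x m. act (scH c x) m = scM c (act x m)) \<and>
     (\<forall>m. act 1 m = m) \<and>
     (\<forall>h k m. swe cop (\<lambda>k1 k2. act h (act k1 (act (S k2) m))) k
            = swe cop (\<lambda>k1 k2. act (h * k1) (act (S k2) m)) k) \<and>
     (\<forall>h k m. swe cop (\<lambda>h1 h2. act h1 (act (S h2) (act k m))) h
            = swe cop (\<lambda>h1 h2. act h1 (act (S h2 * k) m)) h) \<and>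
     (\<forall>h k m. swe cop (\<lambda>k1 k2. act h (act (S k1) (act k2 m))) k
            = swe cop (\<lambda>k1 k2. act (h * S k1) (act k2 m)) k) \<and>
     (\<forall>h k m. swe cop (\<lambda>h1 h2. act (S h1) (act h2 (act k m))) h
            = swe cop (\<lambda>h1 h2. act (S h1) (act (h2 * k) m)) h)"

text \<open>Global: act is an algebra morphism (linearity is already part of partial_module).\<close>
definition is_global :: "('h::ring_1 \<Rightarrow> 'm \<Rightarrow> 'm) \<Rightarrow> bool" where
  "is_global act \<longleftrightarrow> act 1 = id \<and> (\<forall>x y. act (x * y) = act x \<circ> act y)"

text \<open>Morphisms of partial modules: k-linear maps commuting with all act(h).  Between global
  modules these are exactly the H-module maps.\<close>
definition pmorph ::
  "('k::field \<Rightarrow> 'm::ab_group_add \<Rightarrow> 'm) \<Rightarrow> ('h \<Rightarrow> 'm \<Rightarrow> 'm)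
   \<Rightarrow> ('k \<Rightarrow> 'n::ab_group_add \<Rightarrow> 'n) \<Rightarrow> ('h \<Rightarrow> 'n \<Rightarrow> 'n) \<Rightarrow> ('m \<Rightarrow> 'n) \<Rightarrow> bool" where
  "pmorph scM act scN rho f \<longleftrightarrow> Vector_Spaces.linear scM scN f \<and> (\<forall>h m. f (act h m) = rho h (f m))"

definition psubmodule :: "('k::field \<Rightarrow> 'm::ab_group_add \<Rightarrow> 'm) \<Rightarrow> ('h \<Rightarrow> 'm \<Rightarrow> 'm) \<Rightarrow> 'm set \<Rightarrow> bool" where
  "psubmodule scM act N \<longleftrightarrow> module.subspace scM N \<and> (\<forall>h. \<forall>m\<in>N. act h m \<in> N)"

definition gen_psubmodule :: "('k::field \<Rightarrow> 'm::ab_group_add \<Rightarrow> 'm) \<Rightarrow> ('h \<Rightarrow> 'm \<Rightarrow> 'm) \<Rightarrow> 'm set \<Rightarrow> 'm set" where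
  "gen_psubmodule scM act G = \<Inter>{N. psubmodule scM act N \<and> G \<subseteq> N}"

definition core_set :: "('h::ring_1 \<Rightarrow> 'm \<Rightarrow> 'm) \<Rightarrow> 'm set" where
  "core_set act = {m. \<forall>g h. act g (act h m) = act (g * h) m}"

definition shadow_ker :: "('k::field \<Rightarrow> 'm::ab_group_add \<Rightarrow> 'm) \<Rightarrow> ('h::ring_1 \<Rightarrow> 'm \<Rightarrow> 'm) \<Rightarrow> 'm set" where
  "shadow_ker scM act = gen_psubmodule scM act {act h (act g m) - act (h * g) m | h g m. True}"

end

theory Submission
  imports Defs
begin

lemma lin_facts: assumes "Vector_Spaces.linear s1 s2 f"
  shows "f (x + y) = f x + f y" "f (s1 c x) = s2 c (f x)" "f 0 = 0" "f (x - y) = f x - f y"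
proof -
  interpret Vector_Spaces.linear s1 s2 f by fact
  show "f (x + y) = f x + f y" "f (s1 c x) = s2 c (f x)" "f 0 = 0" "f (x - y) = f x - f y"
    by (simp_all add: add scale zero diff)
qed

lemma vs_module: "vector_space s \<Longrightarrow> module s"
  by (simp add: module_iff_vector_space)

lemma subspace_iff: "vector_space s \<Longrightarrow> module.subspace s S \<longleftrightarrow>
  (0 \<in> S \<and> (\<forall>x\<in>S. \<forall>y\<in>S. x + y \<in> S) \<and> (\<forall>c. \<forall>x\<in>S. s c x \<in> S))"
  by (rule module.subspace_def[OF vs_module])

lemma sc0: "vector_space s \<Longrightarrow> s c 0 = 0"
  by (rule module.scale_zero_right[OF vs_module])

lemma pm_facts: assumes "partial_module scH cop S scM act"
  shows "vector_space scM" "Vector_Spaces.linear scM scM (act h)" "act 1 m = m"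
  using assms unfolding partial_module_def by auto

lemma gen_least: "psubmodule s a N \<Longrightarrow> G \<subseteq> N \<Longrightarrow> gen_psubmodule s a G \<subseteq> N"
  unfolding gen_psubmodule_def by blast

lemma gen_sub: assumes "vector_space s" shows "psubmodule s a (gen_psubmodule s a G)"
  using assms unfolding gen_psubmodule_def psubmodule_def subspace_iff[OF assms] by blast

lemma kernel_psub:
  assumes vM: "vector_space scM" and vQ: "vector_space scQ"
    and q: "pmorph scM act scQ actQ q" and N: "psubmodule scQ actQ N"
  shows "psubmodule scM act {m. q m \<in> N}"
proof -
  have l: "Vector_Spaces.linear scM scQ q" and c: "\<And>h m. q (act h m) = actQ h (q m)"
    using q unfolding pmorph_def by auto
  show ?thesis using N unfolding psubmodule_def subspace_iff[OF vM] subspace_iff[OF vQ]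
    by (auto simp: lin_facts[OF l] c)
qed

lemma gens_in:
  assumes q: "pmorph scM act scQ actQ q" and g: "is_global actQ"
  shows "{act h (act g m) - act (h * g) m | h g m. True} \<subseteq> {m. q m = 0}"
proof -
  have l: "Vector_Spaces.linear scM scQ q" and c: "\<And>h m. q (act h m) = actQ h (q m)"
    using q unfolding pmorph_def by auto
  show ?thesis using g unfolding is_global_def by (auto simp: lin_facts[OF l] c)
qed

lemma ker_global:
  assumes vM: "vector_space scM" and Q: "partial_module scH cop S scQ actQ"
    and q: "pmorph scM act scQ actQ q" and g: "is_global actQ"
  shows "shadow_ker scM act \<subseteq> {m. q m = 0}"
proof -
  have vQ: "vector_space scQ" by (rule pm_facts(1)[OF Q])
  have "psubmodule scM act {m. q m \<in> {0}}"
    by (rule kernel_psub[OF vM vQ q])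
      (simp add: psubmodule_def subspace_iff[OF vQ] lin_facts[OF pm_facts(2)[OF Q]] sc0[OF vQ])
  then have P: "psubmodule scM act {m. q m = 0}" by simp
  show ?thesis unfolding shadow_ker_def by (rule gen_least[OF P gens_in[OF q g]])
qed

lemma core_mem: "x \<in> core_set act \<longleftrightarrow> (\<forall>g h. act g (act h x) = act (g * h) x)"
  unfolding core_set_def by simp

lemma core_psub: assumes M: "partial_module scH cop S scM act"
  shows "psubmodule scM act (core_set act)"
proof -
  note v = pm_facts(1)[OF M]
  have a: "act h (x + y) = act h x + act h y" for h x y by (rule lin_facts(1)[OF pm_facts(2)[OF M]])
  have b: "act h (scM c x) = scM c (act h x)" for h c x by (rule lin_facts(2)[OF pm_facts(2)[OF M]])
  have z: "act h 0 = 0" for h by (rule lin_facts(3)[OF pm_facts(2)[OF M]])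
  show ?thesis unfolding psubmodule_def subspace_iff[OF v]
  proof (intro conjI ballI allI)
    show "0 \<in> core_set act" unfolding core_mem by (simp add: z)
  next
    fix x y assume "x \<in> core_set act" "y \<in> core_set act"
    then have x: "\<And>g h. act g (act h x) = act (g * h) x" and y: "\<And>g h. act g (act h y) = act (g * h) y"
      unfolding core_mem by blast+
    show "x + y \<in> core_set act" unfolding core_mem by (simp add: a x y)
  next
    fix c x assume "x \<in> core_set act"
    then have x: "\<And>g h. act g (act h x) = act (g * h) x" unfolding core_mem by blast
    show "scM c x \<in> core_set act" unfolding core_mem by (simp add: b x)
  next
    fix h x assume "x \<in> core_set act"
    then have x: "\<And>g h. act g (act h x) = act (g * h) x" unfolding core_mem by blast
    have "act g (act k (act h x)) = act (g * k) (act h x)" for g k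
      by (simp only: x mult.assoc)
    then show "act h x \<in> core_set act" unfolding core_mem by blast
  qed
qed

theorem mainTheorem4:
  fixes scH :: "'k::field \<Rightarrow> 'h::ring_1 \<Rightarrow> 'h"
    and cop :: "'h \<Rightarrow> ('h \<times> 'h) list" and eps :: "'h \<Rightarrow> 'k" and S :: "'h \<Rightarrow> 'h"
    and scM :: "'k \<Rightarrow> 'm::ab_group_add \<Rightarrow> 'm" and act :: "'h \<Rightarrow> 'm \<Rightarrow> 'm"
  assumes H: "hopf_algebra scH cop eps S"
    and M: "partial_module scH cop S scM act"
  shows
    \<comment> \<open>(a) c(M) is a partial submodule ...\<close>
    "psubmodule scM act (core_set act)
     \<comment> \<open>... and it is the largest global partial submodule: a partial submodule, given as the
         image of an injective morphism j : X \<rightarrow> M, is global iff it lies in c(M)\<close>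
     \<and> (\<forall>(scX :: 'k \<Rightarrow> 'x::ab_group_add \<Rightarrow> 'x) actX j.
          partial_module scH cop S scX actX \<and> pmorph scX actX scM act j \<and> inj j \<longrightarrow>
          (is_global actX \<longleftrightarrow> range j \<subseteq> core_set act))
     \<comment> \<open>c is a functor: morphisms map c(M) into c(M')\<close>
     \<and> (\<forall>(scM' :: 'k \<Rightarrow> 'm2::ab_group_add \<Rightarrow> 'm2) act' f.
          partial_module scH cop S scM' act' \<and> pmorph scM act scM' act' f \<longrightarrow>
          f ` core_set act \<subseteq> core_set act')
     \<comment> \<open>c is right adjoint to i: Hom_par(i X, M) = Hom_H(X, c(M)) for every H-module X\<close>
     \<and> (\<forall>(scX :: 'k \<Rightarrow> 'x::ab_group_add \<Rightarrow> 'x) actX.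
          partial_module scH cop S scX actX \<and> is_global actX \<longrightarrow>
          {f. pmorph scX actX scM act f} = {f. pmorph scX actX scM act f \<and> range f \<subseteq> core_set act})
     \<comment> \<open>(b) N is a partial submodule ...\<close>
     \<and> psubmodule scM act (shadow_ker scM act)
     \<comment> \<open>... and M/N is the largest global quotient: a quotient of M, given as a surjective
         morphism q : M \<rightarrow> Q, is global iff N is contained in ker q\<close>
     \<and> (\<forall>(scQ :: 'k \<Rightarrow> 'q::ab_group_add \<Rightarrow> 'q) actQ q.
          partial_module scH cop S scQ actQ \<and> pmorph scM act scQ actQ q \<and> surj q \<longrightarrow>
          (is_global actQ \<longleftrightarrow> shadow_ker scM act \<subseteq> {m. q m = 0}))
     \<comment> \<open>s is a functor: morphisms map N into N', hence induce M/N \<rightarrow> M'/N'\<close>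
     \<and> (\<forall>(scM' :: 'k \<Rightarrow> 'm2::ab_group_add \<Rightarrow> 'm2) act' f.
          partial_module scH cop S scM' act' \<and> pmorph scM act scM' act' f \<longrightarrow>
          f ` shadow_ker scM act \<subseteq> shadow_ker scM' act')
     \<comment> \<open>s is left adjoint to i: Hom_par(M, i Y) = Hom_H(M/N, Y), the latter identified with the
         morphisms M \<rightarrow> Y vanishing on N\<close>
     \<and> (\<forall>(scY :: 'k \<Rightarrow> 'y::ab_group_add \<Rightarrow> 'y) actY.
          partial_module scH cop S scY actY \<and> is_global actY \<longrightarrow>
          {f. pmorph scM act scY actY f} = {f. pmorph scM act scY actY f \<and> shadow_ker scM act \<subseteq> {m. f m = 0}})"
proof -
  note vM = pm_facts(1)[OF M]
  have A1: "psubmodule scM act (core_set act)" by (rule core_psub[OF M])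
  have A2: "\<forall>(scX :: 'k \<Rightarrow> 'x::ab_group_add \<Rightarrow> 'x) actX j.
          partial_module scH cop S scX actX \<and> pmorph scX actX scM act j \<and> inj j \<longrightarrow>
          (is_global actX \<longleftrightarrow> range j \<subseteq> core_set act)"
  proof (intro allI impI)
    fix scX :: "'k \<Rightarrow> 'x::ab_group_add \<Rightarrow> 'x" and actX j
    assume a: "partial_module scH cop S scX actX \<and> pmorph scX actX scM act j \<and> inj j"
    then have c: "\<And>h m. j (actX h m) = act h (j m)" and ij: "inj j"
      and one: "\<And>m. actX 1 m = m"
      using pm_facts(3) unfolding pmorph_def by blast+
    show "is_global actX \<longleftrightarrow> range j \<subseteq> core_set act"
    proof
      assume "is_global actX"
      then show "range j \<subseteq> core_set act"
        unfolding is_global_def core_set_def by (auto simp flip: c)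
    next
      assume r: "range j \<subseteq> core_set act"
      have "actX g (actX h m) = actX (g * h) m" for g h m
      proof -
        have "j m \<in> core_set act" using r by auto
        then have "j (actX g (actX h m)) = j (actX (g * h) m)"
          unfolding core_set_def by (simp add: c)
        then show ?thesis using ij by (simp add: inj_eq)
      qed
      then show "is_global actX" unfolding is_global_def using one by auto
    qed
  qed
  have A3: "\<forall>(scM' :: 'k \<Rightarrow> 'm2::ab_group_add \<Rightarrow> 'm2) act' f.
          partial_module scH cop S scM' act' \<and> pmorph scM act scM' act' f \<longrightarrow>
          f ` core_set act \<subseteq> core_set act'"
  proof (intro allI impI subsetI)
    fix scM' :: "'k \<Rightarrow> 'm2::ab_group_add \<Rightarrow> 'm2" and act' f y
    assume a: "partial_module scH cop S scM' act' \<and> pmorph scM act scM' act' f"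
      and y: "y \<in> f ` core_set act"
    then have c: "\<And>h m. f (act h m) = act' h (f m)" unfolding pmorph_def by blast
    obtain m where m: "m \<in> core_set act" and yy: "y = f m" using y by blast
    have "act' g (act' h y) = act' (g * h) y" for g h
    proof -
      have "act g (act h m) = act (g * h) m" using m unfolding core_set_def by blast
      then have "f (act g (act h m)) = f (act (g * h) m)" by simp
      then show ?thesis unfolding yy c .
    qed
    then show "y \<in> core_set act'" unfolding core_set_def by blast
  qed
  have A4: "\<forall>(scX :: 'k \<Rightarrow> 'x::ab_group_add \<Rightarrow> 'x) actX.
          partial_module scH cop S scX actX \<and> is_global actX \<longrightarrow>
          {f. pmorph scX actX scM act f} = {f. pmorph scX actX scM act f \<and> range f \<subseteq> core_set act}"
  proof (intro allI impI)
    fix scX :: "'k \<Rightarrow> 'x::ab_group_add \<Rightarrow> 'x" and actX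
    assume a: "partial_module scH cop S scX actX \<and> is_global actX"
    then have g: "\<And>x y. actX (x * y) = actX x \<circ> actX y" unfolding is_global_def by blast
    have "range f \<subseteq> core_set act" if f: "pmorph scX actX scM act f" for f
    proof
      fix y assume "y \<in> range f"
      then obtain m where yy: "y = f m" by blast
      have c: "\<And>h m. f (actX h m) = act h (f m)" using f unfolding pmorph_def by blast
      have "act g (act h y) = act (g * h) y" for g h
      proof -
        have "actX g (actX h m) = actX (g * h) m" using g by simp
        then have "f (actX g (actX h m)) = f (actX (g * h) m)" by simp
        then show ?thesis unfolding yy c .
      qed
      then show "y \<in> core_set act" unfolding core_set_def by blast
    qed
    then show "{f. pmorph scX actX scM act f} = {f. pmorph scX actX scM act f \<and> range f \<subseteq> core_set act}"
      by blast
  qed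
  have B1: "psubmodule scM act (shadow_ker scM act)"
    unfolding shadow_ker_def by (rule gen_sub[OF vM])
  have B2: "\<forall>(scQ :: 'k \<Rightarrow> 'q::ab_group_add \<Rightarrow> 'q) actQ q.
          partial_module scH cop S scQ actQ \<and> pmorph scM act scQ actQ q \<and> surj q \<longrightarrow>
          (is_global actQ \<longleftrightarrow> shadow_ker scM act \<subseteq> {m. q m = 0})"
  proof (intro allI impI)
    fix scQ :: "'k \<Rightarrow> 'q::ab_group_add \<Rightarrow> 'q" and actQ q
    assume a: "partial_module scH cop S scQ actQ \<and> pmorph scM act scQ actQ q \<and> surj q"
    then have Q: "partial_module scH cop S scQ actQ" and q: "pmorph scM act scQ actQ q"
      and s: "surj q" by auto
    have l: "Vector_Spaces.linear scM scQ q" and c: "\<And>h m. q (act h m) = actQ h (q m)"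
      using q unfolding pmorph_def by auto
    show "is_global actQ \<longleftrightarrow> shadow_ker scM act \<subseteq> {m. q m = 0}"
    proof
      assume "is_global actQ"
      then show "shadow_ker scM act \<subseteq> {m. q m = 0}" by (rule ker_global[OF vM Q q])
    next
      assume k: "shadow_ker scM act \<subseteq> {m. q m = 0}"
      have gen: "act h (act g m) - act (h * g) m \<in> shadow_ker scM act" for h g m
        unfolding shadow_ker_def gen_psubmodule_def by blast
      have "actQ h (actQ g y) = actQ (h * g) y" for h g y
      proof -
        obtain m where y: "y = q m" using s by (metis surj_def)
        have "q (act h (act g m) - act (h * g) m) = 0" using gen k by blast
        then show ?thesis unfolding y by (simp add: lin_facts[OF l] c)
      qed
      then show "is_global actQ" unfolding is_global_def using pm_facts(3)[OF Q] by auto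
    qed
  qed
  have B3: "\<forall>(scM' :: 'k \<Rightarrow> 'm2::ab_group_add \<Rightarrow> 'm2) act' f.
          partial_module scH cop S scM' act' \<and> pmorph scM act scM' act' f \<longrightarrow>
          f ` shadow_ker scM act \<subseteq> shadow_ker scM' act'"
  proof (intro allI impI)
    fix scM' :: "'k \<Rightarrow> 'm2::ab_group_add \<Rightarrow> 'm2" and act' f
    assume a: "partial_module scH cop S scM' act' \<and> pmorph scM act scM' act' f"
    then have M': "partial_module scH cop S scM' act'" and f: "pmorph scM act scM' act' f" by auto
    have vM': "vector_space scM'" by (rule pm_facts(1)[OF M'])
    have l: "Vector_Spaces.linear scM scM' f" and c: "\<And>h m. f (act h m) = act' h (f m)"
      using f unfolding pmorph_def by auto
    have P: "psubmodule scM act {m. f m \<in> shadow_ker scM' act'}"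
      by (rule kernel_psub[OF vM vM' f]) (unfold shadow_ker_def, rule gen_sub[OF vM'])
    have G: "{act h (act g m) - act (h * g) m | h g m. True} \<subseteq> {m. f m \<in> shadow_ker scM' act'}"
    proof
      fix x assume "x \<in> {act h (act g m) - act (h * g) m | h g m. True}"
      then obtain h g m where x: "x = act h (act g m) - act (h * g) m" by blast
      have "f x = act' h (act' g (f m)) - act' (h * g) (f m)"
        unfolding x by (simp add: lin_facts[OF l] c)
      moreover have "act' h (act' g (f m)) - act' (h * g) (f m) \<in> shadow_ker scM' act'"
        unfolding shadow_ker_def gen_psubmodule_def by blast
      ultimately show "x \<in> {m. f m \<in> shadow_ker scM' act'}" by simp
    qed
    show "f ` shadow_ker scM act \<subseteq> shadow_ker scM' act'"
      using gen_least[OF P G] unfolding shadow_ker_def by blast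
  qed
  have B4: "\<forall>(scY :: 'k \<Rightarrow> 'y::ab_group_add \<Rightarrow> 'y) actY.
          partial_module scH cop S scY actY \<and> is_global actY \<longrightarrow>
          {f. pmorph scM act scY actY f} = {f. pmorph scM act scY actY f \<and> shadow_ker scM act \<subseteq> {m. f m = 0}}"
    using ker_global[OF vM] by blast
  show ?thesis using A1 A2 A3 A4 B1 B2 B3 B4 by blast
qed

end
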